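(* In the layer stripping setup (see context), with $\Theta(t):=\frac{1}{\sqrt{1+|t|^2}}\begin{pmatrix}1&-t\\\overline t&1\end{pmatrix}$ for $t\in\mathbb C$: (a) $a_{0,k}=a_{0,k-1}\sqrt{1+|\gamma_{k-1}|^2}$ for every $1\le k\le n$; in particular $a_{0,0}\le a_{0,1}\le\dots\le a_{0,n-1}$. (b) For every $0\le k\le n-1$: $\|G_k\Theta(\gamma_k)\|_2=\|G_k\|_2$ and $\|G_k\Theta(\gamma_k)\|_F=\|G_k\|_F=\|G_0\|_F=1$. (c) For every $0\le k\le n-2$: $\|G_{k+1}\|_1=\|G_k\Theta(\gamma_k)\|_1$. (d) $|a_{j,k}|\le1$ and $|b_{j,k}|\le1$ for all $0\le k\le n-1$, $0\le j\le n-k-1$. (e) $|\gamma_k|\le\Big(a_{0,0}\prod_{j=0}^{k-1}\sqrt{1+|\gamma_j|^2}\Big)^{-1}$ for every $0\le k\le n-1$.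
   Context: For a Laurent polynomial $a$, $a^*(z):=\overline{a(1/\overline z)}$. $\mathcal S$ is the set of pairs $(a,b)$ of Laurent polynomials with $aa^*+bb^*=1$ and $0<a^*(0)<\infty$; the NLFT is a bijection from compactly supported sequences $\mathbb Z\to\mathbb C$ onto $\mathcal S$, where the NLFT of $\boldsymbol\gamma$ supported in $[p,q]$ is $\prod_{k=p}^{q}\frac{1}{\sqrt{1+|\gamma_k|^2}}\begin{pmatrix}1&\gamma_k z^k\\-\overline{\gamma_k}z^{-k}&1\end{pmatrix}=\begin{pmatrix}a&b\\-b^*&a^*\end{pmatrix}$ (product ordered by increasing $k$). Layer stripping setup: let $n\ge1$ and $(a,b)\in\mathcal S$ with $b$ a polynomial of degree at most $n-1$. Set $a_0^*:=a^*$, $b_0:=b$, and for $k=0,\dots,n-1$ define recursively $\gamma_k:=b_k(0)/a_k^*(0)$, $a_{k+1}^*:=(a_k^*+\overline{\gamma_k}b_k)/\sqrt{1+|\gamma_k|^2}$, $b_{k+1}:=(b_k-\gamma_k a_k^* )/(z\sqrt{1+|\gamma_k|^2})$. (It is known that this is well defined, that $a_k^*,b_k$ are polynomials of degree at most $n-1-k$ with $a_k^*(0)>0$, that $a_n^*\equiv1$, $b_n\equiv0$, and that $(\gamma_0,\dots,\gamma_{n-1})$, extended by zero, is the unique sequence whose NLFT is $(a,b)$.) Write $a_k^*(z)=\sum_{j=0}^{n-1-k}a_{j,k}z^j$, $b_k(z)=\sum_{j=0}^{n-1-k}b_{j,k}z^j$, $\mathbf a_k:=(a_{0,k},\dots,a_{n-1-k,k})^T$,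 $\mathbf b_k:=(b_{0,k},\dots,b_{n-1-k,k})^T$ and $G_k:=(\mathbf a_k,\mathbf b_k)\in\mathbb C^{(n-k)\times2}$; conventions $a_{n-k,k}:=0$ for $0\le k\le n-1$ and $a_{0,n}:=1$. $\|\cdot\|_1,\|\cdot\|_2$ are induced matrix norms, $\|\cdot\|_F$ the Frobenius norm. *)

theory Defs
  imports Complex_Main "HOL-Library.Complex_Order" "Jordan_Normal_Form.Matrix"
begin

text \<open>A Laurent polynomial f(z) = sum_j f j z^j is represented by its coefficient
function f :: int => complex with finite support.\<close>

definition laurent :: "(int \<Rightarrow> complex) \<Rightarrow> bool" where
  "laurent f \<longleftrightarrow> finite {j. f j \<noteq> 0}"

text \<open>f^*(z) = conj (f (1 / conj z)); coefficientwise (f^*)_j = conj (f_(-j)).\<close>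
definition lstar :: "(int \<Rightarrow> complex) \<Rightarrow> int \<Rightarrow> complex" where
  "lstar f = (\<lambda>j. cnj (f (- j)))"

definition lmult :: "(int \<Rightarrow> complex) \<Rightarrow> (int \<Rightarrow> complex) \<Rightarrow> int \<Rightarrow> complex" where
  "lmult f g = (\<lambda>j. \<Sum>i\<in>{i. f i \<noteq> 0}. f i * g (j - i))"

definition lone :: "int \<Rightarrow> complex" where
  "lone = (\<lambda>j. if j = 0 then 1 else 0)"

text \<open>The class S: a a^* + b b^* = 1 and 0 < a^*(0) < infinity, i.e. a^* has no
negative powers (it is finite at 0) and its value at 0 is a positive real.\<close>
definition in_S :: "(int \<Rightarrow> complex) \<Rightarrow> (int \<Rightarrow> complex) \<Rightarrow> bool" where
  "in_S a b \<longleftrightarrow> laurent a \<and> laurent b \<and>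
     (\<lambda>j. lmult a (lstar a) j + lmult b (lstar b) j) = lone \<and>
     (\<forall>j<0. lstar a j = 0) \<and> 0 < lstar a 0"

definition poly_deg_le :: "(int \<Rightarrow> complex) \<Rightarrow> nat \<Rightarrow> bool" where
  "poly_deg_le f d \<longleftrightarrow> (\<forall>j. (j < 0 \<or> j > int d) \<longrightarrow> f j = 0)"

definition gam :: "(int \<Rightarrow> complex) \<Rightarrow> (int \<Rightarrow> complex) \<Rightarrow> complex" where
  "gam A B = B 0 / A 0"

text \<open>strip a b k = (a_k^*, b_k). Evaluation at 0 of a polynomial is its 0-th
coefficient; division by z shifts coefficients.\<close>
fun strip :: "(int \<Rightarrow> complex) \<Rightarrow> (int \<Rightarrow> complex) \<Rightarrow> nat \<Rightarrow> (int \<Rightarrow> complex) \<times> (int \<Rightarrow> complex)" where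
  "strip a b 0 = (lstar a, b)"
| "strip a b (Suc k) =
     (let A = fst (strip a b k); B = snd (strip a b k); g = gam A B;
          s = complex_of_real (sqrt (1 + (cmod g)\<^sup>2))
      in ((\<lambda>j. (A j + cnj g * B j) / s), (\<lambda>j. (B (j + 1) - g * A (j + 1)) / s)))"

definition astar :: "(int \<Rightarrow> complex) \<Rightarrow> (int \<Rightarrow> complex) \<Rightarrow> nat \<Rightarrow> int \<Rightarrow> complex" where
  "astar a b k = fst (strip a b k)"

definition bk :: "(int \<Rightarrow> complex) \<Rightarrow> (int \<Rightarrow> complex) \<Rightarrow> nat \<Rightarrow> int \<Rightarrow> complex" where
  "bk a b k = snd (strip a b k)"

definition gamma :: "(int \<Rightarrow> complex) \<Rightarrow> (int \<Rightarrow> complex) \<Rightarrow> nat \<Rightarrow> complex" where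
  "gamma a b k = gam (astar a b k) (bk a b k)"

definition Gmat :: "(int \<Rightarrow> complex) \<Rightarrow> (int \<Rightarrow> complex) \<Rightarrow> nat \<Rightarrow> nat \<Rightarrow> complex mat" where
  "Gmat a b n k = mat (n - k) 2
     (\<lambda>(i, j). if j = 0 then astar a b k (int i) else bk a b k (int i))"

definition Theta :: "complex \<Rightarrow> complex mat" where
  "Theta t = mat 2 2 (\<lambda>(i, j). complex_of_real (1 / sqrt (1 + (cmod t)\<^sup>2)) *
      (if i = 0 \<and> j = 0 then 1 else if i = 0 \<and> j = 1 then - t
       else if i = 1 \<and> j = 0 then cnj t else 1))"

definition vnorm1 :: "complex vec \<Rightarrow> real" where
  "vnorm1 v = (\<Sum>i<dim_vec v. cmod (v $ i))"

definition vnorm2 :: "complex vec \<Rightarrow> real" where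
  "vnorm2 v = sqrt (\<Sum>i<dim_vec v. (cmod (v $ i))\<^sup>2)"

definition opnorm1 :: "complex mat \<Rightarrow> real" where
  "opnorm1 A = Sup {vnorm1 (A *\<^sub>v x) | x. x \<in> carrier_vec (dim_col A) \<and> vnorm1 x = 1}"

definition opnorm2 :: "complex mat \<Rightarrow> real" where
  "opnorm2 A = Sup {vnorm2 (A *\<^sub>v x) | x. x \<in> carrier_vec (dim_col A) \<and> vnorm2 x = 1}"

definition frob :: "complex mat \<Rightarrow> real" where
  "frob A = sqrt (\<Sum>i<dim_row A. \<Sum>j<dim_col A. (cmod (A $$ (i, j)))\<^sup>2)"

end

theory Submission
  imports Defs
begin

lemma sum_supp:
  assumes "finite S" "finite T" "\<And>j. f j \<noteq> 0 \<Longrightarrow> j \<in> S" "\<And>j. f j \<noteq> 0 \<Longrightarrow> j \<in> T"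
  shows "sum f S = sum f T"
proof -
  have "sum f S = sum f (S \<inter> T)"
    by (rule sum.mono_neutral_right) (use assms in auto)
  also have "\<dots> = sum f T"
    by (rule sum.mono_neutral_left) (use assms in auto)
  finally show ?thesis .
qed

lemma pointwise_id:
  fixes x y u v g :: complex and s :: real
  assumes s: "s > 0" "s\<^sup>2 = 1 + (cmod g)\<^sup>2"
  shows "(x + cnj g * y) / of_real s * cnj ((u + cnj g * v) / of_real s)
       + (y - g * x) / of_real s * cnj ((v - g * u) / of_real s) = x * cnj u + y * cnj v"
proof -
  have gg: "g * cnj g = of_real ((cmod g)\<^sup>2)" using complex_norm_square[of g] by simp
  have ss: "of_real s * of_real s = (of_real (s\<^sup>2) :: complex)" by (simp add: power2_eq_square)
  have "(x + cnj g * y) / of_real s * cnj ((u + cnj g * v) / of_real s)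
       + (y - g * x) / of_real s * cnj ((v - g * u) / of_real s)
     = ((x + cnj g * y) * (cnj u + g * cnj v) + (y - g * x) * (cnj v - cnj g * cnj u)) / (of_real s * of_real s)"
    using s by (simp add: field_simps)
  also have "(x + cnj g * y) * (cnj u + g * cnj v) + (y - g * x) * (cnj v - cnj g * cnj u)
      = (1 + g * cnj g) * (x * cnj u + y * cnj v)" by (simp add: algebra_simps)
  also have "1 + g * cnj g = of_real s * of_real s" using gg s ss by simp
  finally show ?thesis using s by simp
qed

definition Inv :: "(int \<Rightarrow> complex) \<Rightarrow> (int \<Rightarrow> complex) \<Rightarrow> int \<Rightarrow> bool" where
  "Inv A B m \<longleftrightarrow> (\<forall>j. A j \<noteq> 0 \<longrightarrow> 0 \<le> j \<and> j \<le> m) \<and> (\<forall>j. B j \<noteq> 0 \<longrightarrow> 0 \<le> j \<and> j \<le> m)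
     \<and> (\<forall>d. (\<Sum>j\<in>{0..m}. A (j + d) * cnj (A j) + B (j + d) * cnj (B j)) = (if d = 0 then 1 else 0))"

lemma deg_lemma:
  fixes A B :: "int \<Rightarrow> complex"
  assumes fin: "finite {j. A j \<noteq> 0}" and Apos: "\<And>j. A j \<noteq> 0 \<Longrightarrow> 0 \<le> j" and A0: "A 0 \<noteq> 0"
    and Bs: "\<And>j. B j \<noteq> 0 \<Longrightarrow> 0 \<le> j \<and> j \<le> m"
    and corr: "\<And>d. d > m \<Longrightarrow> (\<Sum>j\<in>{j. A j \<noteq> 0} \<union> {0..m}. A (j + d) * cnj (A j) + B (j + d) * cnj (B j)) = 0"
  shows "A j \<noteq> 0 \<Longrightarrow> j \<le> m"
proof (rule ccontr)
  assume aj: "A j \<noteq> 0" and "\<not> j \<le> m"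
  define D where "D = Max {j. A j \<noteq> 0}"
  have DS: "A D \<noteq> 0" unfolding D_def using fin aj Max_in[of "{j. A j \<noteq> 0}"] by auto
  have Dmax: "\<And>i. A i \<noteq> 0 \<Longrightarrow> i \<le> D" unfolding D_def using fin by auto
  have Dm: "D > m" using Dmax[OF aj] \<open>\<not> j \<le> m\<close> by simp
  let ?f = "\<lambda>j. A (j + D) * cnj (A j) + B (j + D) * cnj (B j)"
  have "sum ?f ({j. A j \<noteq> 0} \<union> {0..m}) = sum ?f {0}"
  proof (rule sum_supp)
    fix i assume ne: "?f i \<noteq> 0"
    show "i \<in> {0}"
    proof (cases "A (i + D) * cnj (A i) = 0")
      case True
      then have "B (i + D) \<noteq> 0" "B i \<noteq> 0" using ne by auto
      then have "i + D \<le> m" "0 \<le> i" using Bs by blast+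
      then show ?thesis using Dm by simp
    next
      case False
      then have "A (i + D) \<noteq> 0" "A i \<noteq> 0" by auto
      then show ?thesis using Dmax Apos by fastforce
    qed
    then show "i \<in> {j. A j \<noteq> 0} \<union> {0..m}" using A0 by auto
  qed (use fin in auto)
  also have "\<dots> = A D * cnj (A 0)" using Bs[of D] Dm by force
  finally have "A D * cnj (A 0) = 0" using corr[OF Dm] by simp
  then show False using DS A0 by simp
qed

lemma a0_lemma:
  fixes A0 B0 :: complex
  assumes "Im A0 = 0" "Re A0 > 0"
  shows "(A0 + cnj (B0 / A0) * B0) / of_real (sqrt (1 + (cmod (B0 / A0))\<^sup>2))
       = A0 * of_real (sqrt (1 + (cmod (B0 / A0))\<^sup>2))"
proof -
  define r where "r = Re A0"
  have A0r: "A0 = of_real r" using assms unfolding r_def by (simp add: complex_eq_iff)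
  have r: "r > 0" using assms r_def by simp
  define s where "s = sqrt (1 + (cmod B0 / r)\<^sup>2)"
  have s: "s > 0" "s\<^sup>2 = 1 + (cmod B0 / r)\<^sup>2" unfolding s_def by (auto intro: add_pos_nonneg)
  have cm: "cmod (B0 / A0) = cmod B0 / r" using A0r r by (simp add: norm_divide)
  have bb: "cnj B0 * B0 = of_real ((cmod B0)\<^sup>2)" using complex_norm_square[of B0] by (simp add: mult.commute)
  have "cnj (B0 / A0) * B0 = of_real ((cmod B0)\<^sup>2 / r)" using A0r bb by simp
  then have "(A0 + cnj (B0 / A0) * B0) = of_real (r + (cmod B0)\<^sup>2 / r)" using A0r by simp
  also have "r + (cmod B0)\<^sup>2 / r = r * s * s" using s r by (simp add: power2_eq_square field_simps)
  finally have "(A0 + cnj (B0 / A0) * B0) = of_real (r * s) * of_real s" by simp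
  then show ?thesis using cm s A0r by (simp add: s_def)
qed

lemma step_lemma:
  fixes A B :: "int \<Rightarrow> complex" and m :: int
  assumes inv: "Inv A B m" and m1: "m \<ge> 1" and A0: "Im (A 0) = 0" "Re (A 0) > 0"
  defines "g \<equiv> B 0 / A 0"
  defines "s \<equiv> sqrt (1 + (cmod g)\<^sup>2)"
  shows "Inv (\<lambda>j. (A j + cnj g * B j) / of_real s) (\<lambda>j. (B (j+1) - g * A (j+1)) / of_real s) (m - 1)"
proof -
  define A' where "A' = (\<lambda>j. (A j + cnj g * B j) / of_real s)"
  define C where "C = (\<lambda>j. (B j - g * A j) / of_real s)"
  define B' where "B' = (\<lambda>j. (B (j+1) - g * A (j+1)) / of_real s)"
  have B'C: "B' j = C (j + 1)" for j unfolding B'_def C_def by simp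
  have sp: "s > 0" "s\<^sup>2 = 1 + (cmod g)\<^sup>2" unfolding s_def by (auto intro: add_pos_nonneg)
  have A0ne: "A 0 \<noteq> 0" using A0 by auto
  have As: "\<And>j. A j \<noteq> 0 \<Longrightarrow> 0 \<le> j \<and> j \<le> m" and Bs: "\<And>j. B j \<noteq> 0 \<Longrightarrow> 0 \<le> j \<and> j \<le> m"
    and corr: "\<And>d. (\<Sum>j\<in>{0..m}. A (j + d) * cnj (A j) + B (j + d) * cnj (B j)) = (if d = 0 then 1 else 0)"
    using inv unfolding Inv_def by blast+
  have C0: "C 0 = 0" unfolding C_def g_def using A0ne by simp
  have Cs: "C j \<noteq> 0 \<Longrightarrow> 1 \<le> j \<and> j \<le> m" for j
  proof -
    assume "C j \<noteq> 0"
    then have "j \<noteq> 0" "A j \<noteq> 0 \<or> B j \<noteq> 0" using C0 unfolding C_def by auto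
    then show ?thesis using As Bs by fastforce
  qed
  have A's: "A' j \<noteq> 0 \<Longrightarrow> 0 \<le> j \<and> j \<le> m" for j
  proof -
    assume "A' j \<noteq> 0"
    then have "A j \<noteq> 0 \<or> B j \<noteq> 0" unfolding A'_def by auto
    then show ?thesis using As Bs by fastforce
  qed
  have B's: "B' j \<noteq> 0 \<Longrightarrow> 0 \<le> j \<and> j \<le> m - 1" for j using Cs[of "j+1"] B'C[of j] by simp
  have A'0: "A' 0 \<noteq> 0"
  proof -
    have "A' 0 = A 0 * of_real s" unfolding A'_def s_def g_def using a0_lemma[OF A0] by simp
    then show ?thesis using A0ne sp by simp
  qed
  have corr': "(\<Sum>j\<in>{0..m}. A' (j + d) * cnj (A' j) + B' (j + d) * cnj (B' j)) = (if d = 0 then 1 else 0)" for d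
  proof -
    let ?X = "\<lambda>j. A' (j + d) * cnj (A' j)"
    let ?Y = "\<lambda>j. C (j + d) * cnj (C j)"
    have "(\<Sum>j\<in>{0..m}. A' (j + d) * cnj (A' j) + B' (j + d) * cnj (B' j))
        = (\<Sum>j\<in>{0..m}. ?X j) + (\<Sum>j\<in>{0..m}. ?Y (j + 1))"
      by (simp add: B'C sum.distrib algebra_simps)
    also have "(\<Sum>j\<in>{0..m}. ?Y (j + 1)) = (\<Sum>j\<in>(\<lambda>j. j + 1) ` {0..m}. ?Y j)"
      by (subst sum.reindex) (auto simp: inj_on_def)
    also have "\<dots> = (\<Sum>j\<in>{0..m}. ?Y j)"
    proof (rule sum_supp)
      fix j assume "?Y j \<noteq> 0"
      then have "C j \<noteq> 0" by auto
      then have j: "1 \<le> j \<and> j \<le> m" using Cs by blast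
      then show "j \<in> {0..m}" by simp
      have "j = (j - 1) + 1" by simp
      then show "j \<in> (\<lambda>j. j + 1) ` {0..m}" using j by (metis atLeastAtMost_iff diff_ge_0_iff_ge diff_le_eq image_eqI add_increasing2 zero_le_one)
    qed auto
    also have "(\<Sum>j\<in>{0..m}. ?X j) + (\<Sum>j\<in>{0..m}. ?Y j) = (\<Sum>j\<in>{0..m}. A (j + d) * cnj (A j) + B (j + d) * cnj (B j))"
      unfolding sum.distrib[symmetric] A'_def C_def
      by (rule sum.cong[OF refl], rule pointwise_id[OF sp])
    finally show ?thesis using corr by simp
  qed
  have A's2: "A' j \<noteq> 0 \<Longrightarrow> j \<le> m - 1" for j
  proof (rule deg_lemma[where A=A' and B=B' and m="m-1"])
    show "finite {j. A' j \<noteq> 0}" by (rule finite_subset[of _ "{0..m}"]) (use A's in auto)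
    show "A' j \<noteq> 0 \<Longrightarrow> 0 \<le> j" for j using A's by blast
    show "A' 0 \<noteq> 0" by (rule A'0)
    show "B' j \<noteq> 0 \<Longrightarrow> 0 \<le> j \<and> j \<le> m - 1" for j by (rule B's)
    fix d :: int assume d: "d > m - 1"
    have "(\<Sum>j\<in>{j. A' j \<noteq> 0} \<union> {0..m-1}. A' (j + d) * cnj (A' j) + B' (j + d) * cnj (B' j))
        = (\<Sum>j\<in>{0..m}. A' (j + d) * cnj (A' j) + B' (j + d) * cnj (B' j))"
    proof (rule sum_supp)
      show "finite ({j. A' j \<noteq> 0} \<union> {0..m - 1})" by (rule finite_subset[of _ "{0..m}"]) (use A's in auto)
      fix j assume "A' (j + d) * cnj (A' j) + B' (j + d) * cnj (B' j) \<noteq> 0"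
      then have "A' j \<noteq> 0 \<or> B' j \<noteq> 0" by auto
      then show "j \<in> {j. A' j \<noteq> 0} \<union> {0..m - 1}" "j \<in> {0..m}" using A's B's by fastforce+
    qed auto
    then show "(\<Sum>j\<in>{j. A' j \<noteq> 0} \<union> {0..m-1}. A' (j + d) * cnj (A' j) + B' (j + d) * cnj (B' j)) = 0"
      using corr' d m1 by simp
  qed
  have "(\<Sum>j\<in>{0..m-1}. A' (j + d) * cnj (A' j) + B' (j + d) * cnj (B' j)) = (if d = 0 then 1 else 0)" for d
  proof -
    have "(\<Sum>j\<in>{0..m-1}. A' (j + d) * cnj (A' j) + B' (j + d) * cnj (B' j))
        = (\<Sum>j\<in>{0..m}. A' (j + d) * cnj (A' j) + B' (j + d) * cnj (B' j))"
    proof (rule sum_supp)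
      fix j assume "A' (j + d) * cnj (A' j) + B' (j + d) * cnj (B' j) \<noteq> 0"
      then have "A' j \<noteq> 0 \<or> B' j \<noteq> 0" by auto
      then show "j \<in> {0..m - 1}" "j \<in> {0..m}" using A's A's2 B's by fastforce+
    qed auto
    then show ?thesis using corr' by simp
  qed
  then show ?thesis unfolding Inv_def A'_def[symmetric] B'_def[symmetric] using A's A's2 B's by auto
qed


lemma astar_0: "astar a b 0 = lstar a" unfolding astar_def by simp
lemma bk_0: "bk a b 0 = b" unfolding bk_def by simp
lemma gamma_eq: "gamma a b k = bk a b k 0 / astar a b k 0" unfolding gamma_def gam_def ..
lemma astar_Suc: "astar a b (Suc k) = (\<lambda>j. (astar a b k j + cnj (gamma a b k) * bk a b k j)
     / of_real (sqrt (1 + (cmod (gamma a b k))\<^sup>2)))"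
  unfolding astar_def bk_def gamma_def by (simp add: Let_def)
lemma bk_Suc: "bk a b (Suc k) = (\<lambda>j. (bk a b k (j + 1) - gamma a b k * astar a b k (j + 1))
     / of_real (sqrt (1 + (cmod (gamma a b k))\<^sup>2)))"
  unfolding astar_def bk_def gamma_def by (simp add: Let_def)

lemma astar0_step:
  assumes "Im (astar a b k 0) = 0" "Re (astar a b k 0) > 0"
  shows "astar a b (Suc k) 0 = astar a b k 0 * of_real (sqrt (1 + (cmod (gamma a b k))\<^sup>2))"
  using a0_lemma[OF assms, of "bk a b k 0"] unfolding astar_Suc gamma_eq by simp

lemma astar0_pos:
  assumes S: "in_S a b"
  shows "Im (astar a b k 0) = 0 \<and> Re (astar a b k 0) > 0"
proof (induction k)
  case 0
  have "0 < lstar a 0" using S unfolding in_S_def by blast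
  then show ?case unfolding astar_0 by (simp add: less_complex_def)
next
  case (Suc k)
  have "Re (of_real (sqrt (1 + (cmod (gamma a b k))\<^sup>2))::complex) > 0" by (simp add: add_pos_nonneg)
  then show ?case using Suc astar0_step[of a b k] by simp
qed

lemma base_lemma:
  fixes a b :: "int \<Rightarrow> complex" and n :: nat
  assumes n: "n \<ge> 1" and S: "in_S a b" and bdeg: "poly_deg_le b (n - 1)"
  shows "Inv (lstar a) b (int n - 1)"
proof -
  define A where "A = lstar a"
  define m where "m = int n - 1"
  have m0: "m \<ge> 0" using n m_def by simp
  have la: "laurent a" and lb: "laurent b" and id: "(\<lambda>j. lmult a (lstar a) j + lmult b (lstar b) j) = lone"
    and neg: "\<forall>j<0. lstar a j = 0" and pos: "0 < lstar a 0" using S unfolding in_S_def by blast+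
  have Bs: "b j \<noteq> 0 \<Longrightarrow> 0 \<le> j \<and> j \<le> m" for j
    using bdeg n unfolding poly_deg_le_def m_def by (metis not_le of_nat_diff of_nat_1)
  have As: "A j \<noteq> 0 \<Longrightarrow> 0 \<le> j" for j using neg unfolding A_def by (metis not_le)
  have Aim: "{j. A j \<noteq> 0} = uminus ` {i. a i \<noteq> 0}"
    unfolding A_def lstar_def by (auto simp: image_iff) (metis minus_minus)
  have finA: "finite {j. A j \<noteq> 0}" unfolding Aim using la unfolding laurent_def by simp
  have finb: "finite {i. b i \<noteq> 0}" using lb unfolding laurent_def by simp
  have A0: "A 0 \<noteq> 0" using pos unfolding A_def by auto
  define T where "T = {j. A j \<noteq> 0} \<union> {0..m}"
  have finT: "finite T" unfolding T_def using finA by simp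
  have corrT: "(\<Sum>j\<in>T. A (j + d) * cnj (A j) + b (j + d) * cnj (b j)) = (if d = 0 then 1 else 0)" for d
  proof -
    have e1: "lmult a (lstar a) d = (\<Sum>j\<in>T. A (j + d) * cnj (A j))"
    proof -
      have "lmult a (lstar a) d = (\<Sum>i\<in>{i. a i \<noteq> 0}. a i * cnj (a (i - d)))"
        unfolding lmult_def lstar_def by simp
      also have "\<dots> = (\<Sum>j\<in>{j. A j \<noteq> 0}. A (j + d) * cnj (A j))"
        by (rule sum.reindex_bij_witness[of _ uminus uminus]) (auto simp: A_def lstar_def mult.commute)
      also have "\<dots> = (\<Sum>j\<in>T. A (j + d) * cnj (A j))"
        by (rule sum_supp) (auto simp: finA finT T_def)
      finally show ?thesis .
    qed
    have e2: "lmult b (lstar b) d = (\<Sum>j\<in>T. b (j + d) * cnj (b j))"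
    proof -
      have "lmult b (lstar b) d = (\<Sum>i\<in>{i. b i \<noteq> 0}. b i * cnj (b (i - d)))"
        unfolding lmult_def lstar_def by simp
      also have "\<dots> = (\<Sum>j\<in>{j. b (j + d) \<noteq> 0}. b (j + d) * cnj (b j))"
        by (rule sum.reindex_bij_witness[of _ "\<lambda>j. j + d" "\<lambda>i. i - d"]) auto
      also have "\<dots> = (\<Sum>j\<in>T. b (j + d) * cnj (b j))"
      proof (rule sum_supp)
        show "finite {j. b (j + d) \<noteq> 0}"
          by (rule finite_subset[of _ "(\<lambda>i. i - d) ` {i. b i \<noteq> 0}"]) (auto simp: finb image_iff, metis add_diff_cancel_right')
        fix j assume "b (j + d) * cnj (b j) \<noteq> 0"
        then show "j \<in> {j. b (j + d) \<noteq> 0}" "j \<in> T" using Bs[of j] by (auto simp: T_def)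
      qed (use finT in auto)
      finally show ?thesis .
    qed
    have "lmult a (lstar a) d + lmult b (lstar b) d = lone d" using fun_cong[OF id, of d] by simp
    then show ?thesis unfolding e1 e2 sum.distrib[symmetric] lone_def by simp
  qed
  have As2: "A j \<noteq> 0 \<Longrightarrow> j \<le> m" for j
    by (rule deg_lemma[where A=A and B=b and m=m]) (use finA As A0 Bs corrT m0 in \<open>simp_all add: T_def\<close>)
  have "(\<Sum>j\<in>{0..m}. A (j + d) * cnj (A j) + b (j + d) * cnj (b j)) = (if d = 0 then 1 else 0)" for d
  proof -
    have "(\<Sum>j\<in>{0..m}. A (j + d) * cnj (A j) + b (j + d) * cnj (b j)) = (\<Sum>j\<in>T. A (j + d) * cnj (A j) + b (j + d) * cnj (b j))"
    proof (rule sum_supp)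
      fix j assume "A (j + d) * cnj (A j) + b (j + d) * cnj (b j) \<noteq> 0"
      then have "A j \<noteq> 0 \<or> b j \<noteq> 0" by auto
      then show "j \<in> {0..m}" "j \<in> T" using As As2 Bs unfolding T_def by fastforce+
    qed (use finT in auto)
    then show ?thesis using corrT by simp
  qed
  then show ?thesis unfolding Inv_def A_def[symmetric] m_def[symmetric] using As As2 Bs by blast
qed

lemma inv_all:
  fixes a b :: "int \<Rightarrow> complex" and n :: nat
  assumes n: "n \<ge> 1" and S: "in_S a b" and bdeg: "poly_deg_le b (n - 1)"
  shows "k \<le> n - 1 \<Longrightarrow> Inv (astar a b k) (bk a b k) (int n - 1 - int k)"
proof (induction k)
  case 0
  then show ?case using base_lemma[OF assms] by (simp add: astar_0 bk_0)
next
  case (Suc k)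
  have IH: "Inv (astar a b k) (bk a b k) (int n - 1 - int k)" using Suc by simp
  have m1: "int n - 1 - int k \<ge> 1" using Suc.prems by simp
  have "int n - 1 - int (Suc k) = int n - 1 - int k - 1" by simp
  then show ?case using step_lemma[OF IH m1 astar0_pos[OF S, of k, THEN conjunct1] astar0_pos[OF S, of k, THEN conjunct2]]
    unfolding astar_Suc bk_Suc gamma_eq by simp
qed

lemma sum2: "(\<Sum>i<(2::nat). f i) = f 0 + (f 1 :: 'a::comm_monoid_add)"
  by (simp add: numeral_2_eq_2)

lemma mult_vec2:
  assumes "dim_col M = 2" "dim_vec x = 2" "i < dim_row M"
  shows "(M *\<^sub>v x) $ i = M $$ (i, 0) * x $ 0 + M $$ (i, 1) * x $ 1"
  using assms by (simp add: scalar_prod_def row_def atLeast0LessThan sum2)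

definition cc :: "complex \<Rightarrow> complex" where "cc t = complex_of_real (1 / sqrt (1 + (cmod t)\<^sup>2))"

lemma dim_Theta[simp]: "dim_row (Theta t) = 2" "dim_col (Theta t) = 2"
  unfolding Theta_def by simp_all

lemma Theta_entries:
  "Theta t $$ (0,0) = cc t" "Theta t $$ (0,1) = - cc t * t"
  "Theta t $$ (1,0) = cc t * cnj t" "Theta t $$ (1,1) = cc t"
  "Theta t $$ (0,Suc 0) = - cc t * t"
  "Theta t $$ (Suc 0,0) = cc t * cnj t" "Theta t $$ (Suc 0,Suc 0) = cc t"
  unfolding Theta_def cc_def by simp_all

lemma mult_Theta:
  assumes "dim_col M = 2" "i < dim_row M"
  shows "(M * Theta t) $$ (i, 0) = cc t * (M $$ (i, 0) + cnj t * M $$ (i, 1))"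
    "(M * Theta t) $$ (i, 1) = cc t * (M $$ (i, 1) - t * M $$ (i, 0))"
  using assms by (simp_all add: scalar_prod_def row_def col_def atLeast0LessThan sum2 Theta_entries algebra_simps)

lemma cc_sq: "cc t * cc t * (1 + t * cnj t) = 1"
proof -
  have p: "1 + (cmod t)\<^sup>2 > 0" by (simp add: add_pos_nonneg)
  have "1 + t * cnj t = of_real (1 + (cmod t)\<^sup>2)" using complex_norm_square[of t] by simp
  then show ?thesis unfolding cc_def using p
    by (simp del: of_real_add add: of_real_mult[symmetric] of_real_divide[symmetric] field_simps)
qed

lemma norm_id:
  "(cmod (cc t * (p + cnj t * q)))\<^sup>2 + (cmod (cc t * (q - t * p)))\<^sup>2 = (cmod p)\<^sup>2 + (cmod q)\<^sup>2"
proof -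
  have sq: "\<And>z. complex_of_real ((cmod z)\<^sup>2) = z * cnj z" using complex_norm_square by simp
  have "complex_of_real ((cmod (cc t * (p + cnj t * q)))\<^sup>2 + (cmod (cc t * (q - t * p)))\<^sup>2)
     = (cc t * cnj (cc t)) * ((p + cnj t * q) * (cnj p + t * cnj q) + (q - t * p) * (cnj q - cnj t * cnj p))"
    unfolding of_real_add sq by (simp add: algebra_simps)
  also have "cnj (cc t) = cc t" unfolding cc_def by simp
  also have "(p + cnj t * q) * (cnj p + t * cnj q) + (q - t * p) * (cnj q - cnj t * cnj p)
     = (1 + t * cnj t) * (p * cnj p + q * cnj q)" by (simp add: algebra_simps)
  also have "cc t * cc t * ((1 + t * cnj t) * (p * cnj p + q * cnj q)) = p * cnj p + q * cnj q"
    using cc_sq[of t] by (metis mult.assoc mult_1)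
  also have "\<dots> = complex_of_real ((cmod p)\<^sup>2 + (cmod q)\<^sup>2)" unfolding of_real_add sq ..
  finally show ?thesis by (simp only: of_real_eq_iff)
qed

lemma frob2:
  assumes "dim_col M = 2"
  shows "frob M = sqrt (\<Sum>i<dim_row M. (cmod (M $$ (i,0)))\<^sup>2 + (cmod (M $$ (i,1)))\<^sup>2)"
  unfolding frob_def assms sum2 ..

lemma frob_Theta:
  assumes "dim_col M = 2"
  shows "frob (M * Theta t) = frob M"
proof -
  have d: "dim_col (M * Theta t) = 2" "dim_row (M * Theta t) = dim_row M" by simp_all
  show ?thesis unfolding frob2[OF d(1)] frob2[OF assms] d(2)
    by (rule arg_cong[where f=sqrt], rule sum.cong[OF refl]) (simp only: mult_Theta[OF assms] norm_id lessThan_iff)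
qed

lemma vnorm2_2: "dim_vec x = 2 \<Longrightarrow> vnorm2 x = sqrt ((cmod (x $ 0))\<^sup>2 + (cmod (x $ 1))\<^sup>2)"
  unfolding vnorm2_def by (simp add: sum2)

lemma Theta_vec:
  assumes "dim_vec x = 2"
  shows "(Theta t *\<^sub>v x) $ 0 = cc t * (x $ 0 - t * x $ 1)" "(Theta t *\<^sub>v x) $ 1 = cc t * (x $ 1 + cnj t * x $ 0)"
  using mult_vec2[of "Theta t" x 0] mult_vec2[of "Theta t" x 1] assms
  by (simp_all add: Theta_entries algebra_simps)

lemma vnorm2_Theta:
  assumes "dim_vec x = 2"
  shows "vnorm2 (Theta t *\<^sub>v x) = vnorm2 x"
proof -
  have d: "dim_vec (Theta t *\<^sub>v x) = 2" by simp
  have n: "(cmod (cc t * (x $ 1 + cnj t * x $ 0)))\<^sup>2 + (cmod (cc t * (x $ 0 - t * x $ 1)))\<^sup>2 = (cmod (x $ 1))\<^sup>2 + (cmod (x $ 0))\<^sup>2"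
    by (rule norm_id)
  have "vnorm2 (Theta t *\<^sub>v x) = sqrt ((cmod ((Theta t *\<^sub>v x) $ 0))\<^sup>2 + (cmod ((Theta t *\<^sub>v x) $ 1))\<^sup>2)"
    by (rule vnorm2_2[OF d])
  also have "\<dots> = sqrt ((cmod (cc t * (x $ 0 - t * x $ 1)))\<^sup>2 + (cmod (cc t * (x $ 1 + cnj t * x $ 0)))\<^sup>2)"
    by (simp only: Theta_vec[OF assms])
  also have "(cmod (cc t * (x $ 0 - t * x $ 1)))\<^sup>2 + (cmod (cc t * (x $ 1 + cnj t * x $ 0)))\<^sup>2 = (cmod (x $ 0))\<^sup>2 + (cmod (x $ 1))\<^sup>2"
    using n by linarith
  also have "sqrt ((cmod (x $ 0))\<^sup>2 + (cmod (x $ 1))\<^sup>2) = vnorm2 x" by (rule vnorm2_2[OF assms, symmetric])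
  finally show ?thesis .
qed

lemma memI2: "v \<in> carrier_vec d \<Longrightarrow> vnorm2 v = 1 \<Longrightarrow> vnorm2 (A *\<^sub>v v) \<in> {vnorm2 (A *\<^sub>v x) | x. x \<in> carrier_vec d \<and> vnorm2 x = 1}"
  by (rule CollectI, rule exI[of _ v]) simp

lemma opnorm2_Theta:
  assumes "dim_col M = 2"
  shows "opnorm2 (M * Theta t) = opnorm2 M"
proof -
  have dc: "dim_col (M * Theta t) = 2" by (simp only: index_mult_mat dim_Theta)
  have Mc: "M \<in> carrier_mat (dim_row M) 2" by (rule carrier_matI) (rule refl, rule assms)
  have Tc: "Theta t \<in> carrier_mat 2 2" by (rule carrier_matI) (rule dim_Theta(1), rule dim_Theta(2))
  have "{vnorm2 ((M * Theta t) *\<^sub>v x) | x. x \<in> carrier_vec (dim_col (M * Theta t)) \<and> vnorm2 x = 1}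
      = {vnorm2 (M *\<^sub>v x) | x. x \<in> carrier_vec (dim_col M) \<and> vnorm2 x = 1}" (is "?L = ?R")
  proof
    show "?L \<subseteq> ?R"
    proof
      fix r assume "r \<in> ?L"
      then obtain x where x: "x \<in> carrier_vec 2" "vnorm2 x = 1" "r = vnorm2 ((M * Theta t) *\<^sub>v x)"
        unfolding dc by auto
      have e: "(M * Theta t) *\<^sub>v x = M *\<^sub>v (Theta t *\<^sub>v x)"
        by (rule assoc_mult_mat_vec[OF Mc Tc x(1)])
      have c: "Theta t *\<^sub>v x \<in> carrier_vec (dim_col M)" by (simp only: carrier_dim_vec dim_mult_mat_vec dim_Theta assms)
      have xd: "dim_vec x = 2" using x(1) by (simp only: carrier_dim_vec)
      have n: "vnorm2 (Theta t *\<^sub>v x) = 1" using vnorm2_Theta[OF xd] x(2) by simp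
      show "r \<in> ?R" unfolding x(3) e by (rule memI2[OF c n])
    qed
  next
    show "?R \<subseteq> ?L"
    proof
      fix r assume "r \<in> ?R"
      then obtain y where y: "y \<in> carrier_vec 2" "vnorm2 y = 1" "r = vnorm2 (M *\<^sub>v y)" unfolding assms by auto
      have yd: "dim_vec y = 2" using y(1) by (simp only: carrier_dim_vec)
      define x where "x = vec 2 (\<lambda>i. if i = 0 then cc t * (y $ 0 + t * y $ 1) else cc t * (y $ 1 - cnj t * y $ 0))"
      have xd: "dim_vec x = 2" unfolding x_def by simp
      have xc: "x \<in> carrier_vec 2" unfolding x_def by simp
      have x0: "x $ 0 = cc t * (y $ 0 + t * y $ 1)" "x $ 1 = cc t * (y $ 1 - cnj t * y $ 0)" unfolding x_def by simp_all
      have e0: "cc t * (cc t * (y $ 0 + t * y $ 1)) - t * (cc t * (cc t * (y $ 1 - cnj t * y $ 0))) = y $ 0"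
      proof -
        have "cc t * (cc t * (y $ 0 + t * y $ 1)) - t * (cc t * (cc t * (y $ 1 - cnj t * y $ 0))) = (cc t * cc t * (1 + t * cnj t)) * y $ 0"
          by (simp add: algebra_simps)
        then show ?thesis using cc_sq[of t] by simp
      qed
      have e1: "cc t * (cc t * (y $ 1 - cnj t * y $ 0)) + cnj t * (cc t * (cc t * (y $ 0 + t * y $ 1))) = y $ 1"
      proof -
        have "cc t * (cc t * (y $ 1 - cnj t * y $ 0)) + cnj t * (cc t * (cc t * (y $ 0 + t * y $ 1))) = (cc t * cc t * (1 + t * cnj t)) * y $ 1"
          by (simp add: algebra_simps)
        then show ?thesis using cc_sq[of t] by simp
      qed
      have Tx: "Theta t *\<^sub>v x = y"
      proof (rule eq_vecI)
        show "dim_vec (Theta t *\<^sub>v x) = dim_vec y" using yd by simp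
        fix i assume "i < dim_vec y"
        then have "i = 0 \<or> i = 1" using yd by auto
        moreover have "(Theta t *\<^sub>v x) $ 0 = y $ 0" unfolding Theta_vec(1)[OF xd] x0 using e0 by (simp add: algebra_simps)
        moreover have "(Theta t *\<^sub>v x) $ 1 = y $ 1" unfolding Theta_vec(2)[OF xd] x0 using e1 by (simp add: algebra_simps)
        ultimately show "(Theta t *\<^sub>v x) $ i = y $ i" by blast
      qed
      have n: "vnorm2 x = 1" using vnorm2_Theta[OF xd, of t] Tx y(2) by simp
      have e: "(M * Theta t) *\<^sub>v x = M *\<^sub>v y"
        using assoc_mult_mat_vec[OF Mc Tc xc] Tx by simp
      show "r \<in> ?L" unfolding y(3) e[symmetric] dc by (rule memI2[OF xc n])
    qed
  qed
  then show ?thesis unfolding opnorm2_def by (rule arg_cong[where f=Sup])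
qed

lemma memI1: "v \<in> carrier_vec d \<Longrightarrow> vnorm1 v = 1 \<Longrightarrow> vnorm1 (A *\<^sub>v v) \<in> {vnorm1 (A *\<^sub>v x) | x. x \<in> carrier_vec d \<and> vnorm1 x = 1}"
  by (rule CollectI, rule exI[of _ v]) simp

lemma opnorm1_2:
  assumes M: "dim_col M = 2"
  shows "opnorm1 M = max (\<Sum>i<dim_row M. cmod (M $$ (i, 0))) (\<Sum>i<dim_row M. cmod (M $$ (i, 1)))"
proof -
  define c0 where "c0 = (\<Sum>i<dim_row M. cmod (M $$ (i, 0)))"
  define c1 where "c1 = (\<Sum>i<dim_row M. cmod (M $$ (i, 1)))"
  let ?X = "{vnorm1 (M *\<^sub>v x) | x. x \<in> carrier_vec (dim_col M) \<and> vnorm1 x = 1}"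
  have ub: "r \<le> max c0 c1" if rX: "r \<in> ?X" for r
  proof -
    obtain x where x: "x \<in> carrier_vec 2" "vnorm1 x = 1" "r = vnorm1 (M *\<^sub>v x)" using rX unfolding M by blast
    have xd: "dim_vec x = 2" using x(1) by (simp only: carrier_dim_vec)
    have nx: "cmod (x $ 0) + cmod (x $ 1) = 1" using x(2) xd unfolding vnorm1_def by (simp add: sum2)
    have "r = (\<Sum>i<dim_row M. cmod (M $$ (i, 0) * x $ 0 + M $$ (i, 1) * x $ 1))"
      unfolding x(3) vnorm1_def dim_mult_mat_vec
      by (rule sum.cong[OF refl]) (simp only: lessThan_iff mult_vec2[OF M xd])
    also have "\<dots> \<le> (\<Sum>i<dim_row M. cmod (M $$ (i, 0)) * cmod (x $ 0) + cmod (M $$ (i, 1)) * cmod (x $ 1))"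
      by (rule sum_mono) (metis norm_mult norm_triangle_ineq)
    also have "\<dots> = c0 * cmod (x $ 0) + c1 * cmod (x $ 1)"
      unfolding c0_def c1_def by (simp add: sum.distrib sum_distrib_right)
    also have "\<dots> \<le> max c0 c1 * cmod (x $ 0) + max c0 c1 * cmod (x $ 1)"
      by (intro add_mono mult_right_mono) auto
    also have "\<dots> = max c0 c1" using nx by (simp add: distrib_left[symmetric])
    finally show ?thesis .
  qed
  define e0 where "e0 = vec 2 (\<lambda>i. if i = 0 then 1 else 0 :: complex)"
  define e1 where "e1 = vec 2 (\<lambda>i. if i = 0 then 0 else 1 :: complex)"
  have e0d: "dim_vec e0 = 2" and e1d: "dim_vec e1 = 2" unfolding e0_def e1_def by simp_all
  have e0c: "e0 \<in> carrier_vec (dim_col M)" and e1c: "e1 \<in> carrier_vec (dim_col M)"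
    using e0d e1d M by (simp_all only: carrier_dim_vec)
  have e00: "e0 $ 0 = 1" "e0 $ 1 = 0" and e11: "e1 $ 0 = 0" "e1 $ 1 = 1" unfolding e0_def e1_def by simp_all
  have e0n: "vnorm1 e0 = 1" and e1n: "vnorm1 e1 = 1" unfolding vnorm1_def e0_def e1_def by (simp_all add: sum2)
  have "vnorm1 (M *\<^sub>v e0) = c0" unfolding vnorm1_def dim_mult_mat_vec c0_def
    by (rule sum.cong[OF refl]) (simp only: lessThan_iff mult_vec2[OF M e0d] e00 mult_1_right mult_zero_right add_0_right)
  then have m0: "c0 \<in> ?X" using memI1[OF e0c e0n, of M] by simp
  have "vnorm1 (M *\<^sub>v e1) = c1" unfolding vnorm1_def dim_mult_mat_vec c1_def
    by (rule sum.cong[OF refl]) (simp only: lessThan_iff mult_vec2[OF M e1d] e11 mult_1_right mult_zero_right add_0_left)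
  then have m1: "c1 \<in> ?X" using memI1[OF e1c e1n, of M] by simp
  have "max c0 c1 \<in> ?X" using m0 m1 by (cases "c0 \<le> c1") (simp_all add: max_def)
  then have "Sup ?X = max c0 c1" by (rule cSup_eq_maximum) (rule ub)
  then show ?thesis unfolding opnorm1_def c0_def c1_def .
qed

lemma ccdiv: "complex_of_real (1 / s) * z = z / complex_of_real s"
  by (simp add: divide_inverse mult.commute of_real_inverse)

lemma Gmat_dims: "dim_row (Gmat a b n k) = n - k" "dim_col (Gmat a b n k) = 2"
  unfolding Gmat_def by simp_all

lemma Gmat_idx:
  assumes "i < n - k"
  shows "Gmat a b n k $$ (i, 0) = astar a b k (int i)" "Gmat a b n k $$ (i, 1) = bk a b k (int i)"
    "Gmat a b n k $$ (i, Suc 0) = bk a b k (int i)"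
  using assms unfolding Gmat_def by simp_all

lemma sum_int: "(\<Sum>i<N. f (int i)) = (\<Sum>j\<in>{0..int N - 1}. f j)"
  by (rule sum.reindex_bij_witness[of _ nat int]) auto

lemma normsum:
  assumes n: "n \<ge> 1" and S: "in_S a b" and bdeg: "poly_deg_le b (n - 1)" and k: "k < n"
  shows "(\<Sum>i<n-k. (cmod (astar a b k (int i)))\<^sup>2 + (cmod (bk a b k (int i)))\<^sup>2) = 1"
proof -
  have kk: "k \<le> n - 1" using k by simp
  have inv: "Inv (astar a b k) (bk a b k) (int n - 1 - int k)" by (rule inv_all[OF n S bdeg kk])
  then have c0: "\<forall>d. (\<Sum>j\<in>{0..int n - 1 - int k}. astar a b k (j + d) * cnj (astar a b k j) + bk a b k (j + d) * cnj (bk a b k j)) = (if d = 0 then 1 else 0)"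
    unfolding Inv_def by blast
  have c: "(\<Sum>j\<in>{0..int n - 1 - int k}. astar a b k j * cnj (astar a b k j) + bk a b k j * cnj (bk a b k j)) = 1"
    using spec[OF c0, of 0] by (simp only: add_0_right simp_thms(6) if_True)
  have e: "int (n - k) - 1 = int n - 1 - int k" using k by simp
  have sq: "z * cnj z = complex_of_real ((cmod z)\<^sup>2)" for z using complex_norm_square[of z] by simp
  have "complex_of_real (\<Sum>i<n-k. (cmod (astar a b k (int i)))\<^sup>2 + (cmod (bk a b k (int i)))\<^sup>2)
      = (\<Sum>i<n-k. astar a b k (int i) * cnj (astar a b k (int i)) + bk a b k (int i) * cnj (bk a b k (int i)))"
    by (simp only: sq of_real_sum of_real_add)
  also have "\<dots> = (\<Sum>j\<in>{0..int n - 1 - int k}. astar a b k j * cnj (astar a b k j) + bk a b k j * cnj (bk a b k j))"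
    by (rule sum.reindex_bij_witness[of _ nat int]) (use k in auto)
  also have "\<dots> = 1" by (rule c)
  finally show ?thesis by (simp only: of_real_eq_1_iff)
qed

lemma frob_one:
  assumes n: "n \<ge> 1" and S: "in_S a b" and bdeg: "poly_deg_le b (n - 1)" and k: "k < n"
  shows "frob (Gmat a b n k) = 1"
proof -
  have "frob (Gmat a b n k) = sqrt (\<Sum>i<n-k. (cmod (astar a b k (int i)))\<^sup>2 + (cmod (bk a b k (int i)))\<^sup>2)"
    unfolding frob2[OF Gmat_dims(2)] Gmat_dims(1)
    by (rule arg_cong[where f=sqrt], rule sum.cong[OF refl]) (simp only: lessThan_iff Gmat_idx)
  then show ?thesis using normsum[OF assms] by simp
qed

lemma entry_le1:
  assumes n: "n \<ge> 1" and S: "in_S a b" and bdeg: "poly_deg_le b (n - 1)" and k: "k < n" and j: "j < n - k"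
  shows "cmod (astar a b k (int j)) \<le> 1 \<and> cmod (bk a b k (int j)) \<le> 1"
proof -
  have "(cmod (astar a b k (int j)))\<^sup>2 + (cmod (bk a b k (int j)))\<^sup>2 \<le> (\<Sum>i<n-k. (cmod (astar a b k (int i)))\<^sup>2 + (cmod (bk a b k (int i)))\<^sup>2)"
    by (rule member_le_sum[where f="\<lambda>i. (cmod (astar a b k (int i)))\<^sup>2 + (cmod (bk a b k (int i)))\<^sup>2"]) (use j in auto)
  then have h: "(cmod (astar a b k (int j)))\<^sup>2 + (cmod (bk a b k (int j)))\<^sup>2 \<le> 1" using normsum[OF n S bdeg k] by simp
  have "(cmod (astar a b k (int j)))\<^sup>2 \<le> 1" using h zero_le_power2[of "cmod (bk a b k (int j))"] by linarith
  moreover have "(cmod (bk a b k (int j)))\<^sup>2 \<le> 1" using h zero_le_power2[of "cmod (astar a b k (int j))"] by linarith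
  ultimately show ?thesis by (simp only: abs_square_le_1 abs_norm_cancel)
qed

lemma Re_astar0: "in_S a b \<Longrightarrow> Re (astar a b k 0) = Re (astar a b 0 0) * (\<Prod>j<k. sqrt (1 + (cmod (gamma a b j))\<^sup>2))"
proof (induction k)
  case 0 then show ?case by simp
next
  case (Suc k)
  have "astar a b (Suc k) 0 = astar a b k 0 * of_real (sqrt (1 + (cmod (gamma a b k))\<^sup>2))"
    using astar0_step astar0_pos[OF Suc.prems] by blast
  then show ?case using Suc by simp
qed

lemma opnorm1_step:
  assumes n: "n \<ge> 1" and S: "in_S a b" and bdeg: "poly_deg_le b (n - 1)" and k: "k + 2 \<le> n"
  shows "opnorm1 (Gmat a b n (k + 1)) = opnorm1 (Gmat a b n k * Theta (gamma a b k))"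
proof -
  define N where "N = n - k - 1"
  define g where "g = gamma a b k"
  define s where "s = sqrt (1 + (cmod g)\<^sup>2)"
  have s: "s > 0" unfolding s_def by (simp add: add_pos_nonneg)
  have ccg: "cc g = complex_of_real (1 / s)" unfolding cc_def s_def ..
  have nk: "n - k = Suc N" "n - (k + 1) = N" using k unfolding N_def by auto
  have dG: "dim_col (Gmat a b n k * Theta g) = 2" "dim_row (Gmat a b n k * Theta g) = Suc N"
    by (simp_all only: index_mult_mat dim_Theta Gmat_dims nk)
  have h: "Suc k \<le> n - 1" using k by simp
  have inv1: "Inv (astar a b (Suc k)) (bk a b (Suc k)) (int n - 1 - int (Suc k))" by (rule inv_all[OF n S bdeg h])
  have AN: "astar a b (Suc k) (int N) = 0"
  proof (rule ccontr)
    assume "astar a b (Suc k) (int N) \<noteq> 0"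
    then have "int N \<le> int n - 1 - int (Suc k)" using inv1 unfolding Inv_def by blast
    then show False using k unfolding N_def by simp
  qed
  have A0: "astar a b k 0 \<noteq> 0" using astar0_pos[OF S, of k] by auto
  have t0: "bk a b k 0 - g * astar a b k 0 = 0" unfolding g_def gamma_eq using A0 by simp
  have col0: "(\<Sum>i<Suc N. cmod ((Gmat a b n k * Theta g) $$ (i, 0))) = (\<Sum>i<N. cmod (astar a b (Suc k) (int i)))"
  proof -
    have "(\<Sum>i<Suc N. cmod ((Gmat a b n k * Theta g) $$ (i, 0))) = (\<Sum>i<Suc N. cmod (astar a b (Suc k) (int i)))"
    proof (rule sum.cong[OF refl])
      fix i assume "i \<in> {..<Suc N}"
      then have i: "i < dim_row (Gmat a b n k)" "i < n - k" using nk by (simp_all add: Gmat_dims)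
      show "cmod ((Gmat a b n k * Theta g) $$ (i, 0)) = cmod (astar a b (Suc k) (int i))"
        unfolding mult_Theta(1)[OF Gmat_dims(2) i(1)] Gmat_idx[OF i(2)] astar_Suc g_def[symmetric] s_def[symmetric] ccg
        by (simp only: ccdiv)
    qed
    also have "\<dots> = (\<Sum>i<N. cmod (astar a b (Suc k) (int i)))" using AN by simp
    finally show ?thesis .
  qed
  have col1: "(\<Sum>i<Suc N. cmod ((Gmat a b n k * Theta g) $$ (i, 1))) = (\<Sum>i<N. cmod (bk a b (Suc k) (int i)))"
  proof -
    have "(\<Sum>i<Suc N. cmod ((Gmat a b n k * Theta g) $$ (i, 1))) = (\<Sum>i<Suc N. cmod (cc g * (bk a b k (int i) - g * astar a b k (int i))))"
    proof (rule sum.cong[OF refl])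
      fix i assume "i \<in> {..<Suc N}"
      then have i: "i < dim_row (Gmat a b n k)" "i < n - k" using nk by (simp_all add: Gmat_dims)
      show "cmod ((Gmat a b n k * Theta g) $$ (i, 1)) = cmod (cc g * (bk a b k (int i) - g * astar a b k (int i)))"
        unfolding mult_Theta(2)[OF Gmat_dims(2) i(1)] Gmat_idx[OF i(2)] ..
    qed
    also have "\<dots> = (\<Sum>i<N. cmod (cc g * (bk a b k (int (Suc i)) - g * astar a b k (int (Suc i)))))"
    proof -
      have z: "cmod (cc g * (bk a b k (int 0) - g * astar a b k (int 0))) = 0" using t0 by simp
      show ?thesis unfolding sum.lessThan_Suc_shift z by (simp only: add_0)
    qed
    also have "\<dots> = (\<Sum>i<N. cmod (bk a b (Suc k) (int i)))"
      unfolding bk_Suc g_def[symmetric] s_def[symmetric] ccg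
      by (rule sum.cong[OF refl]) (simp only: ccdiv of_nat_Suc add.commute)
    finally show ?thesis .
  qed
  have l0: "(\<Sum>i<N. cmod (Gmat a b n (k + 1) $$ (i, 0))) = (\<Sum>i<N. cmod (astar a b (Suc k) (int i)))"
  proof (rule sum.cong[OF refl])
    fix i assume "i \<in> {..<N}"
    then have i: "i < n - (k + 1)" using nk by simp
    show "cmod (Gmat a b n (k + 1) $$ (i, 0)) = cmod (astar a b (Suc k) (int i))"
      by (simp only: Gmat_idx[OF i] Suc_eq_plus1)
  qed
  have l1: "(\<Sum>i<N. cmod (Gmat a b n (k + 1) $$ (i, 1))) = (\<Sum>i<N. cmod (bk a b (Suc k) (int i)))"
  proof (rule sum.cong[OF refl])
    fix i assume "i \<in> {..<N}"
    then have i: "i < n - (k + 1)" using nk by simp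
    show "cmod (Gmat a b n (k + 1) $$ (i, 1)) = cmod (bk a b (Suc k) (int i))"
      by (simp only: Gmat_idx[OF i] Suc_eq_plus1)
  qed
  have "opnorm1 (Gmat a b n (k + 1)) = max (\<Sum>i<N. cmod (astar a b (Suc k) (int i))) (\<Sum>i<N. cmod (bk a b (Suc k) (int i)))"
    unfolding opnorm1_2[OF Gmat_dims(2)] Gmat_dims(1) nk(2) l0 l1 ..
  moreover have "opnorm1 (Gmat a b n k * Theta g) = max (\<Sum>i<N. cmod (astar a b (Suc k) (int i))) (\<Sum>i<N. cmod (bk a b (Suc k) (int i)))"
    unfolding opnorm1_2[OF dG(1)] dG(2) col0 col1 ..
  ultimately show ?thesis unfolding g_def[symmetric] by (simp only:)
qed

theorem lemma4p1:
  fixes a b :: "int \<Rightarrow> complex" and n :: nat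
  assumes n: "n \<ge> 1"
    and S: "in_S a b"
    and bdeg: "poly_deg_le b (n - 1)"
  shows
    "((\<forall>k\<in>{1..n}. astar a b k 0 =
        astar a b (k - 1) 0 * complex_of_real (sqrt (1 + (cmod (gamma a b (k - 1)))\<^sup>2)))
     \<and> (\<forall>k. k + 1 \<le> n - 1 \<longrightarrow> astar a b k 0 \<le> astar a b (k + 1) 0))
    \<and> (\<forall>k<n. opnorm2 (Gmat a b n k * Theta (gamma a b k)) = opnorm2 (Gmat a b n k)
        \<and> frob (Gmat a b n k * Theta (gamma a b k)) = frob (Gmat a b n k)
        \<and> frob (Gmat a b n k) = frob (Gmat a b n 0)
        \<and> frob (Gmat a b n 0) = 1)
    \<and> (\<forall>k. k + 2 \<le> n \<longrightarrow> opnorm1 (Gmat a b n (k + 1)) = opnorm1 (Gmat a b n k * Theta (gamma a b k)))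
    \<and> (\<forall>k<n. \<forall>j<n - k. cmod (astar a b k (int j)) \<le> 1 \<and> cmod (bk a b k (int j)) \<le> 1)
    \<and> (\<forall>k<n. cmod (gamma a b k) \<le>
        1 / (Re (astar a b 0 0) * (\<Prod>j<k. sqrt (1 + (cmod (gamma a b j))\<^sup>2))))"
proof -
  have step: "astar a b (Suc j) 0 = astar a b j 0 * complex_of_real (sqrt (1 + (cmod (gamma a b j))\<^sup>2))" for j
    using astar0_step astar0_pos[OF S, of j] by blast
  have a1: "\<forall>k\<in>{1..n}. astar a b k 0 =
        astar a b (k - 1) 0 * complex_of_real (sqrt (1 + (cmod (gamma a b (k - 1)))\<^sup>2))"
  proof
    fix k assume "k \<in> {1..n}"
    then obtain j where kj: "k = Suc j" by (cases k) auto
    show "astar a b k 0 = astar a b (k - 1) 0 * complex_of_real (sqrt (1 + (cmod (gamma a b (k - 1)))\<^sup>2))"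
      unfolding kj diff_Suc_1 by (rule step)
  qed
  have a2: "\<forall>k. k + 1 \<le> n - 1 \<longrightarrow> astar a b k 0 \<le> astar a b (k + 1) 0"
  proof (intro allI impI)
    fix k
    define x where "x = astar a b k 0"
    define s where "s = sqrt (1 + (cmod (gamma a b k))\<^sup>2)"
    have x: "Im x = 0" "Re x > 0" using astar0_pos[OF S, of k] unfolding x_def by auto
    have s1: "1 \<le> s" unfolding s_def by simp
    have e: "astar a b (k + 1) 0 = x * complex_of_real s" unfolding x_def s_def Suc_eq_plus1[symmetric] by (rule step)
    have "Re x * 1 \<le> Re x * s" by (rule mult_left_mono) (use s1 x in auto)
    then show "astar a b k 0 \<le> astar a b (k + 1) 0"
      unfolding e x_def[symmetric] less_eq_complex_def using x by simp
  qed
  have b: "\<forall>k<n. opnorm2 (Gmat a b n k * Theta (gamma a b k)) = opnorm2 (Gmat a b n k)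
        \<and> frob (Gmat a b n k * Theta (gamma a b k)) = frob (Gmat a b n k)
        \<and> frob (Gmat a b n k) = frob (Gmat a b n 0)
        \<and> frob (Gmat a b n 0) = 1"
  proof (intro allI impI conjI)
    fix k assume k: "k < n"
    show "opnorm2 (Gmat a b n k * Theta (gamma a b k)) = opnorm2 (Gmat a b n k)"
      by (rule opnorm2_Theta[OF Gmat_dims(2)])
    show "frob (Gmat a b n k * Theta (gamma a b k)) = frob (Gmat a b n k)"
      by (rule frob_Theta[OF Gmat_dims(2)])
    have n0: "0 < n" using n by simp
    show "frob (Gmat a b n k) = frob (Gmat a b n 0)"
      using frob_one[OF n S bdeg k] frob_one[OF n S bdeg n0] by simp
    show "frob (Gmat a b n 0) = 1" by (rule frob_one[OF n S bdeg n0])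
  qed
  have c: "\<forall>k. k + 2 \<le> n \<longrightarrow> opnorm1 (Gmat a b n (k + 1)) = opnorm1 (Gmat a b n k * Theta (gamma a b k))"
    using opnorm1_step[OF n S bdeg] by blast
  have d: "\<forall>k<n. \<forall>j<n - k. cmod (astar a b k (int j)) \<le> 1 \<and> cmod (bk a b k (int j)) \<le> 1"
    using entry_le1[OF n S bdeg] by blast
  have e: "\<forall>k<n. cmod (gamma a b k) \<le>
        1 / (Re (astar a b 0 0) * (\<Prod>j<k. sqrt (1 + (cmod (gamma a b j))\<^sup>2)))"
  proof (intro allI impI)
    fix k assume k: "k < n"
    define r where "r = Re (astar a b k 0)"
    have x: "Im (astar a b k 0) = 0" "r > 0" using astar0_pos[OF S, of k] unfolding r_def by auto
    have xr: "astar a b k 0 = complex_of_real r" using x(1) unfolding r_def by (simp add: complex_eq_iff)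
    have j0: "0 < n - k" using k by simp
    have b0: "cmod (bk a b k 0) \<le> 1" using entry_le1[OF n S bdeg k j0] by simp
    have "cmod (gamma a b k) = cmod (bk a b k 0) / r"
      unfolding gamma_eq norm_divide xr using x(2) by simp
    also have "\<dots> \<le> 1 / r" by (rule divide_right_mono[OF b0]) (use x in simp)
    also have "r = Re (astar a b 0 0) * (\<Prod>j<k. sqrt (1 + (cmod (gamma a b j))\<^sup>2))"
      unfolding r_def by (rule Re_astar0[OF S])
    finally show "cmod (gamma a b k) \<le> 1 / (Re (astar a b 0 0) * (\<Prod>j<k. sqrt (1 + (cmod (gamma a b j))\<^sup>2)))" .
  qed
  show ?thesis using a1 a2 b c d e by blast
qed

end
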